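(* Let $W$ be a nonempty closed subset of $\mathbb{R}$, let $\alpha,\beta\in\mathrm{Aut}(W)$, $a\in\mathrm{Fix}_W(\alpha)$, $b\in\mathrm{Fix}_W(\beta)$. Suppose $a<b$, $\mathrm{Fix}_W(\alpha)\cap(a,b]=\emptyset$ and $\mathrm{Fix}_W(\beta)\cap[a,b)=\emptyset$. Then $\langle\alpha,\beta\rangle$ contains a nonabelian free subsemigroup.
   Context: $\mathrm{Aut}(W)$ is the group of order preserving bijections of $W$ (with the order induced from $\mathbb{R}$). $\mathrm{Fix}_W(g)$ is the set of points of $W$ fixed by $g$. *)

theory Defs
  imports "HOL-Analysis.Analysis"
begin

definition Aut :: "real set \<Rightarrow> (real \<Rightarrow> real) set" where
  "Aut W = {f. bij_betw f W W \<and> strict_mono_on W f}"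

definition Fix :: "real set \<Rightarrow> (real \<Rightarrow> real) \<Rightarrow> real set" where
  "Fix W g = {x \<in> W. g x = x}"

text \<open>Elements of Aut(W) are represented canonically as maps that are the identity off W.\<close>
definition on_W :: "real set \<Rightarrow> (real \<Rightarrow> real) \<Rightarrow> real \<Rightarrow> real" where
  "on_W W f = (\<lambda>x. if x \<in> W then f x else x)"

inductive_set gen_group :: "real set \<Rightarrow> (real \<Rightarrow> real) \<Rightarrow> (real \<Rightarrow> real) \<Rightarrow> (real \<Rightarrow> real) set"
  for W :: "real set" and \<alpha> \<beta> :: "real \<Rightarrow> real" where
  gen_id: "on_W W id \<in> gen_group W \<alpha> \<beta>"
| gen_a: "g \<in> gen_group W \<alpha> \<beta> \<Longrightarrow> on_W W (\<alpha> \<circ> g) \<in> gen_group W \<alpha> \<beta>"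
| gen_a_inv: "g \<in> gen_group W \<alpha> \<beta> \<Longrightarrow> on_W W (inv_into W \<alpha> \<circ> g) \<in> gen_group W \<alpha> \<beta>"
| gen_b: "g \<in> gen_group W \<alpha> \<beta> \<Longrightarrow> on_W W (\<beta> \<circ> g) \<in> gen_group W \<alpha> \<beta>"
| gen_b_inv: "g \<in> gen_group W \<alpha> \<beta> \<Longrightarrow> on_W W (inv_into W \<beta> \<circ> g) \<in> gen_group W \<alpha> \<beta>"

fun word_eval :: "('a \<Rightarrow> 'a) \<Rightarrow> ('a \<Rightarrow> 'a) \<Rightarrow> bool list \<Rightarrow> 'a \<Rightarrow> 'a" where
  "word_eval g h [] = id"
| "word_eval g h (c # w) = (if c then g else h) \<circ> word_eval g h w"

definition free_semigroup_pair :: "('a \<Rightarrow> 'a) \<Rightarrow> ('a \<Rightarrow> 'a) \<Rightarrow> bool" where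
  "free_semigroup_pair g h \<longleftrightarrow>
     (\<forall>u v. u \<noteq> [] \<longrightarrow> v \<noteq> [] \<longrightarrow> word_eval g h u = word_eval g h v \<longrightarrow> u = v)"

end

theory Submission
  imports Defs
begin

lemma Aut_in: "\<sigma> \<in> Aut W \<Longrightarrow> x \<in> W \<Longrightarrow> \<sigma> x \<in> W"
  unfolding Aut_def by (auto dest: bij_betw_apply)

lemma Aut_less: "\<sigma> \<in> Aut W \<Longrightarrow> x \<in> W \<Longrightarrow> y \<in> W \<Longrightarrow> \<sigma> x < \<sigma> y \<longleftrightarrow> x < y"
  unfolding Aut_def
  by (metis (no_types, lifting) linorder_neqE mem_Collect_eq order.asym strict_mono_onD)

lemma Aut_le: "\<sigma> \<in> Aut W \<Longrightarrow> x \<in> W \<Longrightarrow> y \<in> W \<Longrightarrow> \<sigma> x \<le> \<sigma> y \<longleftrightarrow> x \<le> y"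
  by (meson Aut_less not_less)

lemma Aut_surj: "\<sigma> \<in> Aut W \<Longrightarrow> y \<in> W \<Longrightarrow> \<exists>x\<in>W. \<sigma> x = y"
  unfolding Aut_def by (metis (no_types, lifting) bij_betw_def imageE mem_Collect_eq)

lemma Aut_inv_f: "\<sigma> \<in> Aut W \<Longrightarrow> x \<in> W \<Longrightarrow> inv_into W \<sigma> (\<sigma> x) = x"
  unfolding Aut_def by (auto simp: bij_betw_def)

lemma Aut_f_inv: "\<sigma> \<in> Aut W \<Longrightarrow> x \<in> W \<Longrightarrow> \<sigma> (inv_into W \<sigma> x) = x"
  unfolding Aut_def by (auto simp: bij_betw_def f_inv_into_f)

lemma Aut_intro:
  assumes "\<And>x. x \<in> W \<Longrightarrow> \<sigma> x \<in> W" "\<And>y. y \<in> W \<Longrightarrow> \<exists>x\<in>W. \<sigma> x = y"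
    "\<And>x y. x \<in> W \<Longrightarrow> y \<in> W \<Longrightarrow> x < y \<Longrightarrow> \<sigma> x < \<sigma> y"
  shows "\<sigma> \<in> Aut W"
proof -
  have sm: "strict_mono_on W \<sigma>" using assms(3) by (auto intro: strict_mono_onI)
  have "inj_on \<sigma> W" using sm strict_mono_on_imp_inj_on by blast
  moreover have "\<sigma> ` W = W" using assms(1,2) by force
  ultimately show ?thesis unfolding Aut_def bij_betw_def using sm by auto
qed

lemma Aut_inv: assumes "\<sigma> \<in> Aut W" shows "inv_into W \<sigma> \<in> Aut W"
proof (rule Aut_intro)
  fix x assume x: "x \<in> W"
  then obtain z where z: "z \<in> W" "\<sigma> z = x" using Aut_surj assms by blast
  then show "inv_into W \<sigma> x \<in> W" using Aut_inv_f assms by metis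
next
  fix y assume "y \<in> W" then show "\<exists>x\<in>W. inv_into W \<sigma> x = y"
    using Aut_inv_f Aut_in assms by metis
next
  fix x y assume xy: "x \<in> W" "y \<in> W" "x < y"
  obtain x' where x': "x' \<in> W" "\<sigma> x' = x" using Aut_surj assms xy by blast
  obtain y' where y': "y' \<in> W" "\<sigma> y' = y" using Aut_surj assms xy by blast
  show "inv_into W \<sigma> x < inv_into W \<sigma> y"
    using x' y' xy Aut_inv_f[OF assms] Aut_less[OF assms] by metis
qed

lemma Aut_pow: assumes "\<sigma> \<in> Aut W" shows "\<sigma> ^^ n \<in> Aut W"
proof (induction n)
  case 0 show ?case by (rule Aut_intro) auto
next
  case (Suc n)
  show ?case
  proof (rule Aut_intro)
    fix x assume "x \<in> W" then show "(\<sigma> ^^ Suc n) x \<in> W" using Suc Aut_in assms by simp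
  next
    fix y assume "y \<in> W"
    then obtain z where "z \<in> W" "\<sigma> z = y" using Aut_surj assms by blast
    then obtain x where "x \<in> W" "(\<sigma>^^n) x = z" using Aut_surj Suc by blast
    then show "\<exists>x\<in>W. (\<sigma> ^^ Suc n) x = y" using \<open>\<sigma> z = y\<close> by auto
  next
    fix x y assume "x \<in> W" "y \<in> W" "x < y"
    then show "(\<sigma> ^^ Suc n) x < (\<sigma> ^^ Suc n) y"
      using Suc Aut_less Aut_in assms by simp
  qed
qed

lemma inj_on_W: assumes "F \<in> Aut W" shows "inj (on_W W F)"
proof (rule injI)
  fix x y assume "on_W W F x = on_W W F y"
  then show "x = y" unfolding on_W_def using Aut_in[OF assms] Aut_less[OF assms]
    by (smt (verit) linorder_neqE)
qed


lemma sign_prop: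
  assumes \<sigma>: "\<sigma> \<in> Aut W" and cl: "closed W" and x: "x \<in> W" and y: "y \<in> W" "x < y"
    and nofix: "\<forall>z\<in>W. x \<le> z \<and> z \<le> y \<longrightarrow> \<sigma> z \<noteq> z" and sx: "\<sigma> x > x"
  shows "\<sigma> y > y"
proof (rule ccontr)
  assume "\<not> \<sigma> y > y"
  then have sy: "\<sigma> y < y" using nofix y x by force
  define S where "S = {z\<in>W. x \<le> z \<and> z \<le> y \<and> \<sigma> z > z}"
  have xS: "x \<in> S" using x sx y unfolding S_def by auto
  have bdd: "bdd_above S" unfolding S_def by (auto intro: bdd_aboveI[of _ y])
  define s where "s = Sup S"
  have sW: "s \<in> W" unfolding s_def
    by (rule closed_subset_contains_Sup[OF cl]) (use xS bdd in \<open>auto simp: S_def\<close>)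
  have xs: "x \<le> s" unfolding s_def using xS bdd by (simp add: cSup_upper)
  have sy': "s \<le> y" unfolding s_def using xS by (intro cSup_least) (auto simp: S_def)
  have up: "\<And>z. z \<in> S \<Longrightarrow> z \<le> s" unfolding s_def using bdd by (simp add: cSup_upper)
  have "\<sigma> s \<noteq> s" using nofix sW xs sy' by auto
  then consider "\<sigma> s > s" | "\<sigma> s < s" by linarith
  then show False
  proof cases
    case 1
    show False
    proof (cases "\<sigma> s \<le> y")
      case True
      have "\<sigma> s \<in> W" using Aut_in \<sigma> sW by blast
      moreover have "\<sigma> s \<notin> S" using up 1 by force
      ultimately have "\<sigma> (\<sigma> s) \<le> \<sigma> s" using True 1 xs unfolding S_def by auto
      then have "\<sigma> s \<le> s" using Aut_le[OF \<sigma>] sW \<open>\<sigma> s \<in> W\<close> by blast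
      then show False using 1 by simp
    next
      case False
      then have "\<sigma> y < \<sigma> s" using sy by simp
      then have "y < s" using Aut_less[OF \<sigma>] sW y by blast
      then show False using sy' by simp
    qed
  next
    case 2
    then have "\<sigma> s < Sup S" using s_def by simp
    then obtain z where z: "z \<in> S" "\<sigma> s < z" using less_cSup_iff[of S] xS bdd by blast
    then have "\<sigma> s < \<sigma> z" unfolding S_def by auto
    then have "s < z" using Aut_less[OF \<sigma>] sW z(1) unfolding S_def by blast
    then show False using up z(1) by force
  qed
qed

lemma inv_nofix: "\<sigma> \<in> Aut W \<Longrightarrow> x \<in> W \<Longrightarrow> inv_into W \<sigma> x = x \<Longrightarrow> \<sigma> x = x"
  by (metis Aut_f_inv)

lemma left_dir:
  assumes \<sigma>: "\<sigma> \<in> Aut W" and cl: "closed W" and b: "b \<in> W" and sb: "\<sigma> b < b"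
    and nofix: "\<forall>z\<in>W. a < z \<and> z \<le> b \<longrightarrow> \<sigma> z \<noteq> z"
  shows "\<forall>x\<in>W. a < x \<and> x \<le> b \<longrightarrow> \<sigma> x < x"
proof (intro ballI impI)
  fix x assume x: "x \<in> W" "a < x \<and> x \<le> b"
  show "\<sigma> x < x"
  proof (rule ccontr)
    assume "\<not> \<sigma> x < x"
    then have "\<sigma> x > x" using nofix x by force
    then have "x \<noteq> b" using sb by auto
    then have "\<sigma> b > b" using sign_prop[OF \<sigma> cl x(1) b, of] nofix x \<open>\<sigma> x > x\<close> by auto
    then show False using sb by simp
  qed
qed

lemma right_dir:
  assumes \<sigma>: "\<sigma> \<in> Aut W" and cl: "closed W" and a: "a \<in> W" and sa: "\<sigma> a > a"
    and nofix: "\<forall>z\<in>W. a \<le> z \<and> z < b \<longrightarrow> \<sigma> z \<noteq> z"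
  shows "\<forall>x\<in>W. a \<le> x \<and> x < b \<longrightarrow> \<sigma> x > x"
proof (intro ballI impI)
  fix x assume x: "x \<in> W" "a \<le> x \<and> x < b"
  show "\<sigma> x > x"
  proof (cases "x = a")
    case True then show ?thesis using sa by simp
  next
    case False
    then show ?thesis using sign_prop[OF \<sigma> cl a x(1)] nofix x sa by auto
  qed
qed

lemma exists_n:
  assumes cl: "closed W" and f: "f \<in> Aut W" and a: "a \<in> W" and b: "b \<in> W" and ab: "a < b"
    and fa: "f a = a" and dir: "\<forall>x\<in>W. a < x \<and> x \<le> b \<longrightarrow> f x < x" and p: "a < p"
  shows "\<exists>n. (f ^^ n) b < p"
proof (rule ccontr)
  assume "\<not> (\<exists>n. (f ^^ n) b < p)"
  then have ge: "\<And>n. p \<le> (f ^^ n) b" by (simp add: not_less)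
  have inW: "(f ^^ n) b \<in> W \<and> a \<le> (f ^^ n) b \<and> (f ^^ n) b \<le> b" for n
  proof (induction n)
    case 0 then show ?case using b ab by simp
  next
    case (Suc n)
    let ?y = "(f ^^ n) b"
    have "f ?y \<in> W" using Suc Aut_in f by blast
    moreover have "a \<le> f ?y" using Suc Aut_le[OF f a] fa by metis
    moreover have "f ?y \<le> b"
    proof (cases "?y = a")
      case True then show ?thesis using fa ab by simp
    next
      case False then show ?thesis using Suc dir by force
    qed
    ultimately show ?case by simp
  qed
  define T where "T = range (\<lambda>n. (f ^^ n) b)"
  have Tne: "T \<noteq> {}" unfolding T_def by auto
  have Tbdd: "bdd_below T" unfolding T_def using inW by (auto intro: bdd_belowI[of _ a])
  define c where "c = Inf T"
  have cW: "c \<in> W" unfolding c_def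
    by (rule closed_subset_contains_Inf[OF cl]) (use Tne Tbdd inW in \<open>auto simp: T_def\<close>)
  have cp: "p \<le> c" unfolding c_def T_def using ge by (intro cInf_greatest) auto
  have cb: "c \<le> b" unfolding c_def T_def using Tbdd T_def
    by (metis (no_types, lifting) cInf_lower funpow_0 rangeI)
  obtain d where d: "d \<in> W" "f d = c" using Aut_surj f cW by blast
  have "d > c"
  proof (rule ccontr)
    assume "\<not> d > c"
    then have dc: "d \<le> c" by simp
    have "a < d" using d fa p cp Aut_less[OF f a d(1)] by simp
    then have "f d < d" using dir d dc cb by auto
    then show False using d dc by simp
  qed
  then have "Inf T < d" using c_def by simp
  then obtain t where t: "t \<in> T" "t < d" using cInf_less_iff[OF Tne Tbdd] by blast
  then obtain m where m: "t = (f ^^ m) b" unfolding T_def by auto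
  have "f t < c" using Aut_less[OF f _ d(1)] t d inW m by metis
  moreover have "f t \<in> T" unfolding T_def m by (metis funpow.simps(2) o_apply rangeI)
  ultimately show False using cInf_lower[OF _ Tbdd] c_def by fastforce
qed


lemma on_W_comp: "(\<And>x. x \<in> W \<Longrightarrow> F x \<in> W) \<Longrightarrow> on_W W (f \<circ> on_W W F) = on_W W (f \<circ> F)"
  unfolding on_W_def by auto

lemma gen_step:
  assumes "f \<in> {\<alpha>, inv_into W \<alpha>, \<beta>, inv_into W \<beta>}" "\<And>x. x \<in> W \<Longrightarrow> F x \<in> W"
    "on_W W F \<in> gen_group W \<alpha> \<beta>"
  shows "on_W W (f \<circ> F) \<in> gen_group W \<alpha> \<beta>"
  using assms gen_group.intros(2-5)[OF assms(3)] on_W_comp[OF assms(2)] by auto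

lemma gen_pow:
  assumes "f \<in> {\<alpha>, inv_into W \<alpha>, \<beta>, inv_into W \<beta>}" "f \<in> Aut W"
  shows "on_W W (f ^^ n) \<in> gen_group W \<alpha> \<beta>"
proof (induction n)
  case 0 then show ?case using gen_group.gen_id[of W \<alpha> \<beta>] by (simp add: id_def)
next
  case (Suc n)
  have "on_W W (f \<circ> f ^^ n) \<in> gen_group W \<alpha> \<beta>"
    by (rule gen_step[OF assms(1) _ Suc]) (use Aut_in Aut_pow[OF assms(2)] in blast)
  then show ?case by (metis funpow.simps(2))
qed

lemma word_in: "g ` (A \<union> B) \<subseteq> A \<Longrightarrow> h ` (A \<union> B) \<subseteq> B \<Longrightarrow> x \<in> A \<union> B
  \<Longrightarrow> word_eval g h w x \<in> A \<union> B"
  by (induction w) auto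

lemma pingpong:
  assumes ig: "inj g" and ih: "inj h" and disj: "A \<inter> B = {}" and An: "A \<noteq> {}" and Bn: "B \<noteq> {}"
    and gA: "g ` (A \<union> B) \<subseteq> A" and hB: "h ` (A \<union> B) \<subseteq> B"
  shows "free_semigroup_pair g h"
proof -
  have hd: "word_eval g h (c # w) x \<in> (if c then A else B)" if "x \<in> A \<union> B" for c w x
    using word_in[OF gA hB that, of w] gA hB by auto
  have main: "\<forall>v. word_eval g h u = word_eval g h v \<longrightarrow> u = v" for u
  proof (induction u)
    case Nil
    show ?case
    proof (intro allI impI)
      fix v assume eq: "word_eval g h [] = word_eval g h v"
      show "[] = v"
      proof (cases v)
        case (Cons c w)
        obtain x where x: "x \<in> (if c then B else A)" using An Bn by (cases c) auto
        have "word_eval g h v x = x" using eq by (metis id_apply word_eval.simps(1))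
        then show ?thesis using hd[of x c w] x disj Cons by (cases c) auto
      qed simp
    qed
  next
    case (Cons c u)
    show ?case
    proof (intro allI impI)
      fix v assume eq: "word_eval g h (c # u) = word_eval g h v"
      show "c # u = v"
      proof (cases v)
        case Nil
        obtain x where x: "x \<in> (if c then B else A)" using An Bn by (cases c) auto
        have "word_eval g h (c # u) x = x" using eq Nil by simp
        then show ?thesis using hd[of x c u] x disj by (cases c) auto
      next
        case (Cons d w)
        show ?thesis
        proof (cases "c = d")
          case True
          have inj: "inj (if c then g else h)" using ig ih by simp
          have "(if c then g else h) \<circ> word_eval g h u = (if c then g else h) \<circ> word_eval g h w"
            using eq Cons True by simp
          then have "word_eval g h u = word_eval g h w"
            using inj by (simp add: fun_eq_iff inj_eq)
          then show ?thesis using Cons.IH Cons True by simp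
        next
          case False
          obtain x where x: "x \<in> A" using An by auto
          have "word_eval g h (c # u) x = word_eval g h (d # w) x" using eq Cons by simp
          then show ?thesis using hd[of x c u] hd[of x d w] x disj False by (cases c; cases d) auto
        qed
      qed
    qed
  qed
  show ?thesis unfolding free_semigroup_pair_def using main by blast
qed


theorem lemma4p3:
  fixes W :: "real set" and \<alpha> \<beta> :: "real \<Rightarrow> real" and a b :: real
  assumes "W \<noteq> {}" and "closed W"
    and "\<alpha> \<in> Aut W" and "\<beta> \<in> Aut W"
    and "a \<in> Fix W \<alpha>" and "b \<in> Fix W \<beta>"
    and "a < b"
    and "Fix W \<alpha> \<inter> {a<..b} = {}"
    and "Fix W \<beta> \<inter> {a..<b} = {}"
  shows "\<exists>g \<in> gen_group W \<alpha> \<beta>. \<exists>h \<in> gen_group W \<alpha> \<beta>. free_semigroup_pair g h"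
proof -
  note cl = assms(2) and \<alpha> = assms(3) and \<beta> = assms(4) and ab = assms(7)
  have aW: "a \<in> W" and \<alpha>a: "\<alpha> a = a" using assms(5) unfolding Fix_def by auto
  have bW: "b \<in> W" and \<beta>b: "\<beta> b = b" using assms(6) unfolding Fix_def by auto
  have nfa: "\<forall>z\<in>W. a < z \<and> z \<le> b \<longrightarrow> \<alpha> z \<noteq> z" using assms(8) unfolding Fix_def by auto
  have nfb: "\<forall>z\<in>W. a \<le> z \<and> z < b \<longrightarrow> \<beta> z \<noteq> z" using assms(9) unfolding Fix_def by auto
  obtain f where f: "f \<in> {\<alpha>, inv_into W \<alpha>, \<beta>, inv_into W \<beta>}" "f \<in> Aut W" "f a = a" "f b < b"
    "\<forall>z\<in>W. a < z \<and> z \<le> b \<longrightarrow> f z \<noteq> z"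
  proof (cases "\<alpha> b < b")
    case True then show ?thesis using that \<alpha> \<alpha>a nfa by blast
  next
    case False
    then have gt: "\<alpha> b > b" using nfa bW ab by force
    let ?f = "inv_into W \<alpha>"
    have "?f b < b"
    proof (rule ccontr)
      assume "\<not> ?f b < b"
      then have "\<alpha> b \<le> \<alpha> (?f b)" using Aut_le[OF \<alpha>] bW Aut_in[OF Aut_inv[OF \<alpha>] bW] by simp
      then show False using Aut_f_inv[OF \<alpha> bW] gt by simp
    qed
    moreover have "?f a = a" using Aut_inv_f[OF \<alpha> aW] \<alpha>a by simp
    moreover have "\<forall>z\<in>W. a < z \<and> z \<le> b \<longrightarrow> ?f z \<noteq> z" using nfa inv_nofix[OF \<alpha>] by blast
    ultimately show ?thesis using that Aut_inv[OF \<alpha>] by blast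
  qed
  obtain k where k: "k \<in> {\<alpha>, inv_into W \<alpha>, \<beta>, inv_into W \<beta>}" "k \<in> Aut W" "k b = b" "k a > a"
    "\<forall>z\<in>W. a \<le> z \<and> z < b \<longrightarrow> k z \<noteq> z"
  proof (cases "\<beta> a > a")
    case True then show ?thesis using that \<beta> \<beta>b nfb by blast
  next
    case False
    then have lt: "\<beta> a < a" using nfb aW ab by force
    let ?f = "inv_into W \<beta>"
    have "?f a > a"
    proof (rule ccontr)
      assume "\<not> ?f a > a"
      then have "\<beta> (?f a) \<le> \<beta> a" using Aut_le[OF \<beta>] aW Aut_in[OF Aut_inv[OF \<beta>] aW] by simp
      then show False using Aut_f_inv[OF \<beta> aW] lt by simp
    qed
    moreover have "?f b = b" using Aut_inv_f[OF \<beta> bW] \<beta>b by simp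
    moreover have "\<forall>z\<in>W. a \<le> z \<and> z < b \<longrightarrow> ?f z \<noteq> z" using nfb inv_nofix[OF \<beta>] by blast
    ultimately show ?thesis using that Aut_inv[OF \<beta>] by blast
  qed
  have dirf: "\<forall>x\<in>W. a < x \<and> x \<le> b \<longrightarrow> f x < x" using left_dir[OF f(2) cl bW f(4) f(5)] .
  obtain n where n: "(f ^^ n) b < k a" using exists_n[OF cl f(2) aW bW ab f(3) dirf k(4)] by blast
  define F where "F = f ^^ n"
  have F: "F \<in> Aut W" unfolding F_def using Aut_pow f(2) by blast
  have Fa: "F a = a" unfolding F_def using f(3) by (induction n) auto
  have kaW: "k a \<in> W" using Aut_in k(2) aW by blast
  have kab: "k a \<le> b" using Aut_le[OF k(2) aW bW] ab k(3) by simp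
  define A where "A = W \<inter> {a..F b}"
  define B where "B = W \<inter> {k a..b}"
  have Fb: "F b < k a" using n F_def by simp
  have aFb: "a \<le> F b" using Aut_le[OF F aW bW] ab Fa by simp
  have disj: "A \<inter> B = {}" unfolding A_def B_def using Fb by auto
  have An: "A \<noteq> {}" unfolding A_def using aW aFb by auto
  have Bn: "B \<noteq> {}" unfolding B_def using bW kab by auto
  have AB: "x \<in> W \<and> a \<le> x \<and> x \<le> b" if "x \<in> A \<union> B" for x
    using that Fb kab k(4) unfolding A_def B_def by auto
  have gA: "on_W W F ` (A \<union> B) \<subseteq> A"
  proof
    fix y assume "y \<in> on_W W F ` (A \<union> B)"
    then obtain x where x: "x \<in> A \<union> B" "y = on_W W F x" by blast
    then have xx: "x \<in> W" "a \<le> x" "x \<le> b" using AB by auto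
    have "y = F x" using x xx unfolding on_W_def by simp
    then show "y \<in> A" unfolding A_def
      using Aut_in[OF F xx(1)] Aut_le[OF F aW xx(1)] Aut_le[OF F xx(1) bW] xx Fa by auto
  qed
  have hB: "on_W W k ` (A \<union> B) \<subseteq> B"
  proof
    fix y assume "y \<in> on_W W k ` (A \<union> B)"
    then obtain x where x: "x \<in> A \<union> B" "y = on_W W k x" by blast
    then have xx: "x \<in> W" "a \<le> x" "x \<le> b" using AB by auto
    have "y = k x" using x xx unfolding on_W_def by simp
    then show "y \<in> B" unfolding B_def
      using Aut_in[OF k(2) xx(1)] Aut_le[OF k(2) aW xx(1)] Aut_le[OF k(2) xx(1) bW] xx k(3) by auto
  qed
  have fp: "free_semigroup_pair (on_W W F) (on_W W k)"
    by (rule pingpong[OF inj_on_W[OF F] inj_on_W[OF k(2)] disj An Bn gA hB])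
  have g: "on_W W F \<in> gen_group W \<alpha> \<beta>" unfolding F_def using gen_pow[OF f(1,2)] .
  have h: "on_W W k \<in> gen_group W \<alpha> \<beta>" using gen_pow[OF k(1,2), of 1] by simp
  show ?thesis using fp g h by blast
qed

end
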